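(* The fundamental group $\pi_1(\mathrm{Conf}^{lf}_\infty(\mathbb C),\widetilde{\mathbb N})$ is uncountable.
   Context: $\mathrm{Conf}^{lf}_\infty(\mathbb C)$ is the set of sequences $(x_j)_{j\ge1}$ of pairwise distinct complex numbers such that $\{j:|x_j|\le R\}$ is finite for all $R>0$, with metric $d_{\Sigma}(x,y)=\sum_j2^{-j}\min\{|x_j-y_j|,1\}+d_{\mathcal V}(P(x),P(y))$, where $P(x)=\{x_j\}$ and $d_{\mathcal V}$ is the vague metric $d_{\mathcal V}(A,B)=\sum_j 2^{-j}\frac{|\sum_{a\in A}\varphi_j(a)-\sum_{b\in B}\varphi_j(b)|}{1+|\sum_{a\in A}\varphi_j(a)-\sum_{b\in B}\varphi_j(b)|}$ for a fixed sequence $(\varphi_j)$ of compactly supported continuous real functions such that for each $m$ those supported in $\{|z|\le m\}$ are sup-norm dense among such functions supported in $\{|z|\le m\}$. $\widetilde{\mathbb N}=(1,2,3,\dots)$. *)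

theory Defs
  imports "HOL-Analysis.Analysis"
begin

text \<open>Sequences are indexed from 0 here: the paper's x_j (j \<ge> 1) is x (j-1).\<close>

definition conf_lf :: "(nat \<Rightarrow> complex) set" where
  "conf_lf = {x. inj x \<and> (\<forall>R>0. finite {j. cmod (x j) \<le> R})}"

definition nat_config :: "nat \<Rightarrow> complex" where
  "nat_config j = of_nat (j + 1)"

definition admissible_tests :: "(nat \<Rightarrow> complex \<Rightarrow> real) \<Rightarrow> bool" where
  "admissible_tests \<phi> \<longleftrightarrow>
     (\<forall>j. continuous_on UNIV (\<phi> j) \<and> compact (closure {z. \<phi> j z \<noteq> 0})) \<and>
     (\<forall>m::nat. \<forall>f::complex \<Rightarrow> real. \<forall>\<epsilon>>0.
        continuous_on UNIV f \<and> closure {z. f z \<noteq> 0} \<subseteq> cball 0 (real m) \<longrightarrow>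
        (\<exists>j. closure {z. \<phi> j z \<noteq> 0} \<subseteq> cball 0 (real m) \<and>
             (\<forall>z. \<bar>f z - \<phi> j z\<bar> < \<epsilon>)))"

text \<open>Integral of a test function against the counting measure of a locally finite set
  (the set of non-zero terms is finite).\<close>
definition test_sum :: "(complex \<Rightarrow> real) \<Rightarrow> complex set \<Rightarrow> real" where
  "test_sum g A = (\<Sum>a\<in>A \<inter> {z. g z \<noteq> 0}. g a)"

definition vague_dist :: "(nat \<Rightarrow> complex \<Rightarrow> real) \<Rightarrow> complex set \<Rightarrow> complex set \<Rightarrow> real" where
  "vague_dist \<phi> A B = (\<Sum>j. (1/2) ^ (j + 1) *
      (\<bar>test_sum (\<phi> j) A - test_sum (\<phi> j) B\<bar> / (1 + \<bar>test_sum (\<phi> j) A - test_sum (\<phi> j) B\<bar>)))"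

definition conf_dist :: "(nat \<Rightarrow> complex \<Rightarrow> real) \<Rightarrow> (nat \<Rightarrow> complex) \<Rightarrow> (nat \<Rightarrow> complex) \<Rightarrow> real" where
  "conf_dist \<phi> x y = (\<Sum>j. (1/2) ^ (j + 1) * min (cmod (x j - y j)) 1)
                      + vague_dist \<phi> (range x) (range y)"

definition conf_topology :: "(nat \<Rightarrow> complex \<Rightarrow> real) \<Rightarrow> (nat \<Rightarrow> complex) topology" where
  "conf_topology \<phi> = Metric_space.mtopology conf_lf (conf_dist \<phi>)"

definition loops_at :: "'a topology \<Rightarrow> 'a \<Rightarrow> (real \<Rightarrow> 'a) set" where
  "loops_at X b = {g. pathin X g \<and> g 0 = b \<and> g 1 = b}"

definition loop_homotopic :: "'a topology \<Rightarrow> 'a \<Rightarrow> (real \<Rightarrow> 'a) \<Rightarrow> (real \<Rightarrow> 'a) \<Rightarrow> bool" where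
  "loop_homotopic X b p q \<longleftrightarrow>
     (\<exists>h. continuous_map (prod_topology (top_of_set {0..1::real}) (top_of_set {0..1::real})) X h \<and>
          (\<forall>s\<in>{0..1}. h (0, s) = p s \<and> h (1, s) = q s) \<and>
          (\<forall>t\<in>{0..1}. h (t, 0) = b \<and> h (t, 1) = b))"

definition fundamental_group_set :: "'a topology \<Rightarrow> 'a \<Rightarrow> (real \<Rightarrow> 'a) set set" where
  "fundamental_group_set X b =
     loops_at X b // {(p, q). p \<in> loops_at X b \<and> q \<in> loops_at X b \<and> loop_homotopic X b p q}"

end

theory Submission
  imports Defs "HOL-Complex_Analysis.Complex_Analysis"
begin


lemma half_sums: "(\<lambda>j. (1/2::real)^(j+1)) sums 1"
proof -
  have "(\<lambda>j. (1/2::real)^j) sums 2"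
    using geometric_sums[of "1/2::real"] by simp
  then have "(\<lambda>j. (1/2) * (1/2::real)^j) sums ((1/2) * 2)"
    by (rule sums_mult)
  then show ?thesis by simp
qed

lemma half_summable: "summable (\<lambda>j. (1/2::real)^(j+1))"
  using half_sums by (rule sums_summable)

lemma half_suminf: "(\<Sum>j. (1/2::real)^(j+1)) = 1"
  using half_sums by (rule sums_unique[symmetric])

lemma wsummable:
  fixes a :: "nat \<Rightarrow> real"
  assumes "\<And>j. \<bar>a j\<bar> \<le> C * (1/2)^(j+1)"
  shows "summable a"
proof (rule summable_comparison_test[where g="\<lambda>j. C * (1/2)^(j+1)"])
  show "\<exists>N. \<forall>n\<ge>N. norm (a n) \<le> C * (1/2)^(n+1)" using assms by auto
  show "summable (\<lambda>j. C * (1/2::real)^(j+1))"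
    using half_summable by (rule summable_mult)
qed

definition gfrac :: "real \<Rightarrow> real" where "gfrac a = a / (1 + a)"

lemma gfrac_nonneg: "0 \<le> a \<Longrightarrow> 0 \<le> gfrac a"
  by (simp add: gfrac_def)

lemma gfrac_le1: "0 \<le> a \<Longrightarrow> gfrac a \<le> 1"
  by (simp add: gfrac_def)

lemma gfrac_le: "0 \<le> a \<Longrightarrow> gfrac a \<le> a"
  using mult_nonneg_nonneg[of a a] by (simp add: gfrac_def divide_simps algebra_simps)

lemma gfrac_mono: "0 \<le> a \<Longrightarrow> a \<le> b \<Longrightarrow> gfrac a \<le> gfrac b"
  by (simp add: gfrac_def divide_simps algebra_simps)

lemma gfrac_sub: "0 \<le> a \<Longrightarrow> 0 \<le> b \<Longrightarrow> gfrac (a + b) \<le> gfrac a + gfrac b"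
  by (simp add: gfrac_def divide_simps) (auto simp: algebra_simps mult_nonneg_nonneg)

lemma gfrac_tri: "gfrac \<bar>a - c\<bar> \<le> gfrac \<bar>a - b\<bar> + gfrac \<bar>b - (c::real)\<bar>"
proof -
  have "gfrac \<bar>a - c\<bar> \<le> gfrac (\<bar>a - b\<bar> + \<bar>b - c\<bar>)"
    by (rule gfrac_mono) auto
  also have "\<dots> \<le> gfrac \<bar>a - b\<bar> + gfrac \<bar>b - c\<bar>"
    by (rule gfrac_sub) auto
  finally show ?thesis .
qed

lemma vague_dist_alt:
  "vague_dist \<phi> A B = (\<Sum>j. (1/2) ^ (j + 1) * gfrac \<bar>test_sum (\<phi> j) A - test_sum (\<phi> j) B\<bar>)"
  unfolding vague_dist_def gfrac_def by simp

lemma vague_summable: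
  "summable (\<lambda>j. (1/2::real) ^ (j + 1) * gfrac \<bar>test_sum (\<phi> j) A - test_sum (\<phi> j) B\<bar>)"
  by (rule wsummable[where C=1]) (simp add: gfrac_nonneg gfrac_le1 abs_mult)

lemma first_summable:
  "summable (\<lambda>j. (1/2::real) ^ (j + 1) * min (cmod (x j - y j)) 1)"
  by (rule wsummable[where C=1]) (simp add: abs_mult)

lemma vague_nonneg: "0 \<le> vague_dist \<phi> A B"
  unfolding vague_dist_alt
  by (rule suminf_nonneg[OF vague_summable]) (simp add: gfrac_nonneg)

lemma first_nonneg: "0 \<le> (\<Sum>j. (1/2::real) ^ (j + 1) * min (cmod (x j - y j)) 1)"
  by (rule suminf_nonneg[OF first_summable]) simp

lemma conf_dist_nonneg: "0 \<le> conf_dist \<phi> x y"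
  unfolding conf_dist_def using vague_nonneg first_nonneg by (simp add: add_nonneg_nonneg)

lemma conf_dist_coord:
  "(1/2::real)^(k+1) * min (cmod (x k - y k)) 1 \<le> conf_dist \<phi> x y"
proof -
  have "(1/2::real)^(k+1) * min (cmod (x k - y k)) 1 \<le> (\<Sum>j. (1/2::real) ^ (j + 1) * min (cmod (x j - y j)) 1)"
    using sum_le_suminf[OF first_summable, of "{k}" x y] by simp
  then show ?thesis using vague_nonneg[of \<phi> "range x" "range y"] unfolding conf_dist_def by linarith
qed

lemma conf_dist_commute: "conf_dist \<phi> x y = conf_dist \<phi> y x"
  unfolding conf_dist_def vague_dist_def by (simp add: norm_minus_commute abs_minus_commute)

lemma conf_dist_self: "conf_dist \<phi> x x = 0"
  unfolding conf_dist_def vague_dist_def by simp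

lemma conf_dist_triangle: "conf_dist \<phi> x z \<le> conf_dist \<phi> x y + conf_dist \<phi> y z"
proof -
  let ?f = "\<lambda>x y j. (1/2::real) ^ (j + 1) * min (cmod (x j - y j)) 1"
  let ?v = "\<lambda>A B j. (1/2::real) ^ (j + 1) * gfrac \<bar>test_sum (\<phi> j) A - test_sum (\<phi> j) B\<bar>"
  have f: "(\<Sum>j. ?f x z j) \<le> (\<Sum>j. ?f x y j) + (\<Sum>j. ?f y z j)"
  proof -
    have "(\<Sum>j. ?f x z j) \<le> (\<Sum>j. ?f x y j + ?f y z j)"
    proof (rule suminf_le)
      fix j
      have e: "x j - y j + (y j - z j) = x j - z j" by simp
      have "min (cmod (x j - z j)) 1 \<le> min (cmod (x j - y j)) 1 + min (cmod (y j - z j)) 1"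
        using norm_triangle_ineq[of "x j - y j" "y j - z j"] norm_ge_zero[of "x j - y j"]
          norm_ge_zero[of "y j - z j"] unfolding min_def e by (smt (verit))
      then show "?f x z j \<le> ?f x y j + ?f y z j"
        by (metis distrib_left mult_left_mono zero_le_divide_1_iff zero_le_numeral zero_le_power)
    qed (rule first_summable, rule summable_add[OF first_summable first_summable])
    also have "\<dots> = (\<Sum>j. ?f x y j) + (\<Sum>j. ?f y z j)"
      by (rule suminf_add[symmetric]) (rule first_summable)+
    finally show ?thesis .
  qed
  have v: "(\<Sum>j. ?v (range x) (range z) j) \<le> (\<Sum>j. ?v (range x) (range y) j) + (\<Sum>j. ?v (range y) (range z) j)"
  proof -
    have "(\<Sum>j. ?v (range x) (range z) j) \<le> (\<Sum>j. ?v (range x) (range y) j + ?v (range y) (range z) j)"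
    proof (rule suminf_le)
      fix j
      show "?v (range x) (range z) j \<le> ?v (range x) (range y) j + ?v (range y) (range z) j"
        using gfrac_tri by (simp add: flip: distrib_left)
    qed (rule vague_summable, rule summable_add[OF vague_summable vague_summable])
    also have "\<dots> = (\<Sum>j. ?v (range x) (range y) j) + (\<Sum>j. ?v (range y) (range z) j)"
      by (rule suminf_add[symmetric]) (rule vague_summable)+
    finally show ?thesis .
  qed
  show ?thesis unfolding conf_dist_def vague_dist_alt using f v by linarith
qed

lemma conf_dist_zero:
  assumes "conf_dist \<phi> x y = 0" shows "x = y"
proof
  fix k
  have "(1/2::real)^(k+1) * min (cmod (x k - y k)) 1 \<le> 0"
    using conf_dist_coord[of k x y \<phi>] assms by simp
  moreover have "0 < (1/2::real)^(k+1)" by simp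
  ultimately have "min (cmod (x k - y k)) 1 \<le> 0"
    by (metis mult_le_cancel_left_pos mult_zero_right)
  then show "x k = y k" by (simp add: min_def split: if_splits)
qed

lemma conf_metric: "Metric_space conf_lf (conf_dist \<phi>)"
  by (unfold_locales) (auto simp: conf_dist_nonneg conf_dist_commute conf_dist_self
      conf_dist_triangle dest: conf_dist_zero)



lemma openin_conf:
  "openin (conf_topology \<phi>) U \<longleftrightarrow> U \<subseteq> conf_lf \<and>
     (\<forall>x\<in>U. \<exists>r>0. \<forall>y\<in>conf_lf. conf_dist \<phi> x y < r \<longrightarrow> y \<in> U)"
  unfolding conf_topology_def Metric_space.openin_mtopology[OF conf_metric]
    Metric_space.in_mball[OF conf_metric] subset_iff by blast

lemma topspace_conf: "topspace (conf_topology \<phi>) = conf_lf"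
  unfolding conf_topology_def using Metric_space.topspace_mtopology[OF conf_metric] by blast

lemma proj_cont: "continuous_map (conf_topology \<phi>) euclidean (\<lambda>x. x k)"
  unfolding continuous_map_def
proof (intro conjI allI impI)
  show "(\<lambda>x. x k) \<in> topspace (conf_topology \<phi>) \<rightarrow> topspace euclidean" by simp
  fix V :: "complex set" assume "openin euclidean V"
  then have oV: "open V" by simp
  show "openin (conf_topology \<phi>) {x \<in> topspace (conf_topology \<phi>). x k \<in> V}"
    unfolding openin_conf topspace_conf
  proof (intro conjI ballI)
    fix x assume x: "x \<in> {x \<in> conf_lf. x k \<in> V}"
    then obtain e where e: "e > 0" "ball (x k) e \<subseteq> V" using oV open_contains_ball by blast
    define r where "r = (1/2::real)^(k+1) * min e 1"
    have r: "r > 0" using e by (simp add: r_def)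
    have "\<forall>y\<in>conf_lf. conf_dist \<phi> x y < r \<longrightarrow> y \<in> {x \<in> conf_lf. x k \<in> V}"
    proof (intro ballI impI)
      fix y assume y: "y \<in> conf_lf" "conf_dist \<phi> x y < r"
      have "(1/2::real)^(k+1) * min (cmod (x k - y k)) 1 < (1/2::real)^(k+1) * min e 1"
        using conf_dist_coord[of k x y \<phi>] y(2) r_def by linarith
      then have "min (cmod (x k - y k)) 1 < min e 1"
        by (metis mult_less_cancel_left_pos zero_less_divide_1_iff zero_less_numeral zero_less_power)
      then have "cmod (x k - y k) < e" by (auto simp: min_def split: if_splits)
      then have "y k \<in> ball (x k) e" by (simp add: dist_norm)
      then show "y \<in> {x \<in> conf_lf. x k \<in> V}" using e y by auto
    qed
    then show "\<exists>r>0. \<forall>y\<in>conf_lf. conf_dist \<phi> x y < r \<longrightarrow> y \<in> {x \<in> conf_lf. x k \<in> V}"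
      using r by blast
  qed auto
qed

lemma test_sum_K:
  assumes y: "y \<in> conf_lf" and K: "finite K" and sub: "\<And>k. g (y k) \<noteq> 0 \<Longrightarrow> k \<in> K"
  shows "test_sum g (range y) = (\<Sum>k\<in>K. g (y k))"
proof -
  have inj: "inj y" using y by (simp add: conf_lf_def)
  have "range y \<inter> {z. g z \<noteq> 0} \<subseteq> y ` K" using sub by auto
  then have "test_sum g (range y) = sum g (y ` K)"
    unfolding test_sum_def by (intro sum.mono_neutral_left) (auto simp: K)
  also have "\<dots> = (\<Sum>k\<in>K. g (y k))"
  proof -
    have ik: "inj_on y K" using inj by (rule inj_on_subset) simp
    show ?thesis by (simp add: sum.reindex[OF ik])
  qed
  finally show ?thesis .
qed



lemma per_j:
  fixes g :: "complex \<Rightarrow> real"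
  assumes gc: "continuous_on UNIV g" and gs: "compact (closure {z. g z \<noteq> 0})"
    and x: "x \<in> conf_lf" and eps: "\<epsilon> > 0"
  shows "\<exists>\<delta>>0. \<forall>y\<in>conf_lf. (\<forall>k. cmod (x k - y k) \<le> \<delta>) \<longrightarrow>
            \<bar>test_sum g (range x) - test_sum g (range y)\<bar> < \<epsilon>"
proof -
  have "bounded (closure {z. g z \<noteq> 0})" using gs by (rule compact_imp_bounded)
  then obtain R where R0: "R > 0" and R1: "\<forall>z\<in>closure {z. g z \<noteq> 0}. norm z \<le> R"
    unfolding bounded_pos by blast
  have R: "R > 0" "\<And>z. z \<in> closure {z. g z \<noteq> 0} \<Longrightarrow> norm z \<le> R" using R0 R1 by auto
  have Rg: "norm z \<le> R" if "g z \<noteq> 0" for z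
  proof -
    have "z \<in> closure {z. g z \<noteq> 0}" by (rule subsetD[OF closure_subset]) (simp add: that)
    then show ?thesis by (rule R(2))
  qed
  define K where "K = {k. cmod (x k) \<le> R + 1}"
  have lf: "\<forall>R>0. finite {j. cmod (x j) \<le> R}" using x by (simp add: conf_lf_def)
  have "R + 1 > 0" using R(1) by simp
  then have K: "finite K" unfolding K_def using lf by blast
  define S where "S = cball (0::complex) (R + 2)"
  define e where "e = \<epsilon> / (real (card K) + 1)"
  have e: "e > 0" using eps by (simp add: e_def add_pos_nonneg)
  have uc: "uniformly_continuous_on S g"
    by (rule compact_uniformly_continuous) (auto simp: S_def intro: continuous_on_subset[OF gc])
  obtain d where d0: "d > 0" and d1: "\<forall>x\<in>S. \<forall>x'\<in>S. dist x' x < d \<longrightarrow> dist (g x') (g x) < e"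
    using uc e unfolding uniformly_continuous_on_def by blast
  have d: "d > 0" "\<And>u v. u \<in> S \<Longrightarrow> v \<in> S \<Longrightarrow> dist u v < d \<Longrightarrow> dist (g u) (g v) < e"
    using d0 d1 by auto
  define \<delta> where "\<delta> = min 1 (d/2)"
  have \<delta>: "\<delta> > 0" using d by (simp add: \<delta>_def)
  have "\<forall>y\<in>conf_lf. (\<forall>k. cmod (x k - y k) \<le> \<delta>) \<longrightarrow>
            \<bar>test_sum g (range x) - test_sum g (range y)\<bar> < \<epsilon>"
  proof (intro ballI impI)
    fix y assume y: "y \<in> conf_lf" and close: "\<forall>k. cmod (x k - y k) \<le> \<delta>"
    have tx: "test_sum g (range x) = (\<Sum>k\<in>K. g (x k))"
    proof (rule test_sum_K[OF x K])
      fix k assume "g (x k) \<noteq> 0"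
      then have "cmod (x k) \<le> R" by (rule Rg)
      then show "k \<in> K" by (simp add: K_def)
    qed
    have ty: "test_sum g (range y) = (\<Sum>k\<in>K. g (y k))"
    proof (rule test_sum_K[OF y K])
      fix k assume "g (y k) \<noteq> 0"
      then have "cmod (y k) \<le> R" by (rule Rg)
      moreover have "cmod (x k) \<le> cmod (y k) + cmod (x k - y k)"
        by (rule norm_triangle_sub)
      moreover have "\<delta> \<le> 1" by (simp add: \<delta>_def)
      ultimately show "k \<in> K" using close[rule_format, of k] by (simp add: K_def)
    qed
    have each: "\<bar>g (x k) - g (y k)\<bar> \<le> e" if k: "k \<in> K" for k
    proof -
      have xk: "cmod (x k) \<le> R + 1" using k by (simp add: K_def)
      have "cmod (y k) \<le> cmod (x k) + cmod (x k - y k)"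
        using norm_triangle_sub[of "y k" "x k"] by (simp add: norm_minus_commute)
      moreover have "\<delta> \<le> 1" by (simp add: \<delta>_def)
      ultimately have yk: "cmod (y k) \<le> R + 2" using xk close[rule_format, of k] by simp
      have "dist (x k) (y k) < d" using close[rule_format, of k] d(1)
        by (simp add: dist_norm \<delta>_def)
      then have "dist (g (x k)) (g (y k)) < e"
        using d(2)[of "x k" "y k"] xk yk by (simp add: S_def)
      then show ?thesis by (simp add: dist_real_def)
    qed
    have "\<bar>test_sum g (range x) - test_sum g (range y)\<bar> = \<bar>\<Sum>k\<in>K. g (x k) - g (y k)\<bar>"
      by (simp add: tx ty sum_subtractf)
    also have "\<dots> \<le> (\<Sum>k\<in>K. \<bar>g (x k) - g (y k)\<bar>)" by (rule sum_abs)
    also have "\<dots> \<le> (\<Sum>k\<in>K. e)" by (rule sum_mono) (rule each)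
    also have "\<dots> = real (card K) * e" by simp
    also have "\<dots> < \<epsilon>"
    proof -
      have "real (card K) * e = \<epsilon> * (real (card K) / (real (card K) + 1))"
        by (simp add: e_def)
      also have "\<dots> < \<epsilon> * 1" using eps by (intro mult_strict_left_mono) auto
      finally show ?thesis by simp
    qed
    finally show "\<bar>test_sum g (range x) - test_sum g (range y)\<bar> < \<epsilon>" .
  qed
  then show ?thesis using \<delta> by blast
qed




lemma per_j_all:
  assumes adm: "admissible_tests \<phi>" and x: "x \<in> conf_lf" and eps: "\<epsilon> > 0"
  shows "\<exists>\<delta>>0. \<forall>j<N. \<forall>y\<in>conf_lf. (\<forall>k. cmod (x k - y k) \<le> \<delta>) \<longrightarrow>
            \<bar>test_sum (\<phi> j) (range x) - test_sum (\<phi> j) (range y)\<bar> < \<epsilon>"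
proof (induction N)
  case 0
  show ?case by (rule exI[of _ 1]) simp
next
  case (Suc N)
  then obtain \<delta>1 where d1: "\<delta>1 > 0" "\<forall>j<N. \<forall>y\<in>conf_lf. (\<forall>k. cmod (x k - y k) \<le> \<delta>1) \<longrightarrow>
            \<bar>test_sum (\<phi> j) (range x) - test_sum (\<phi> j) (range y)\<bar> < \<epsilon>" by blast
  have "continuous_on UNIV (\<phi> N)" "compact (closure {z. \<phi> N z \<noteq> 0})"
    using adm by (auto simp: admissible_tests_def)
  from per_j[OF this x eps] obtain \<delta>2 where d2: "\<delta>2 > 0" "\<forall>y\<in>conf_lf. (\<forall>k. cmod (x k - y k) \<le> \<delta>2) \<longrightarrow>
            \<bar>test_sum (\<phi> N) (range x) - test_sum (\<phi> N) (range y)\<bar> < \<epsilon>" by blast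
  show ?case
  proof (rule exI[of _ "min \<delta>1 \<delta>2"], intro conjI allI impI ballI)
    show "min \<delta>1 \<delta>2 > 0" using d1 d2 by simp
    fix j y assume j: "j < Suc N" and y: "y \<in> conf_lf" and c: "\<forall>k. cmod (x k - y k) \<le> min \<delta>1 \<delta>2"
    show "\<bar>test_sum (\<phi> j) (range x) - test_sum (\<phi> j) (range y)\<bar> < \<epsilon>"
    proof (cases "j < N")
      case True
      then show ?thesis using d1(2) y c by auto
    next
      case False
      then have "j = N" using j by simp
      then show ?thesis using d2(2) y c by auto
    qed
  qed
qed

lemma close:
  assumes adm: "admissible_tests \<phi>" and x: "x \<in> conf_lf" and eps: "\<epsilon> > 0"
  shows "\<exists>\<delta>>0. \<forall>y\<in>conf_lf. (\<forall>k. cmod (x k - y k) \<le> \<delta>) \<longrightarrow> conf_dist \<phi> x y < \<epsilon>"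
proof -
  have e4: "\<epsilon>/4 > 0" using eps by simp
  obtain N where N: "(1/2::real)^N < \<epsilon>/4"
    using real_arch_pow_inv[OF e4, of "1/2"] by auto
  obtain \<delta>1 where d1: "\<delta>1 > 0" "\<forall>j<N. \<forall>y\<in>conf_lf. (\<forall>k. cmod (x k - y k) \<le> \<delta>1) \<longrightarrow>
            \<bar>test_sum (\<phi> j) (range x) - test_sum (\<phi> j) (range y)\<bar> < \<epsilon>/4"
    using per_j_all[OF adm x e4] by blast
  define \<delta> where "\<delta> = min \<delta>1 (\<epsilon>/4)"
  have \<delta>: "\<delta> > 0" using d1 eps by (simp add: \<delta>_def)
  have "\<forall>y\<in>conf_lf. (\<forall>k. cmod (x k - y k) \<le> \<delta>) \<longrightarrow> conf_dist \<phi> x y < \<epsilon>"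
  proof (intro ballI impI)
    fix y assume y: "y \<in> conf_lf" and c: "\<forall>k. cmod (x k - y k) \<le> \<delta>"
    have A: "(\<Sum>j. (1/2::real) ^ (j + 1) * min (cmod (x j - y j)) 1) \<le> \<epsilon>/4"
    proof -
      have "(\<Sum>j. (1/2::real) ^ (j + 1) * min (cmod (x j - y j)) 1) \<le> (\<Sum>j. (1/2::real) ^ (j + 1) * \<delta>)"
      proof (rule suminf_le)
        fix j show "(1/2::real) ^ (j + 1) * min (cmod (x j - y j)) 1 \<le> (1/2::real) ^ (j + 1) * \<delta>"
          using c[rule_format, of j] by (intro mult_left_mono) (auto simp: min_le_iff_disj)
        show "summable (\<lambda>j. (1/2::real) ^ (j + 1) * \<delta>)"
          using half_summable by (rule summable_mult2)
      qed (rule first_summable)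
      also have "\<dots> = \<delta>" using suminf_mult2[OF half_summable, of \<delta>] half_suminf by simp
      also have "\<dots> \<le> \<epsilon>/4" by (simp add: \<delta>_def)
      finally show ?thesis .
    qed
    define a where "a = (\<lambda>j. (1/2::real) ^ (j + 1) * gfrac \<bar>test_sum (\<phi> j) (range x) - test_sum (\<phi> j) (range y)\<bar>)"
    have sa: "summable a" unfolding a_def by (rule vague_summable)
    have a_nonneg: "0 \<le> a j" for j unfolding a_def by (simp add: gfrac_nonneg)
    have a_le: "a j \<le> (1/2::real)^(j+1)" for j
      unfolding a_def using gfrac_le1[of "\<bar>test_sum (\<phi> j) (range x) - test_sum (\<phi> j) (range y)\<bar>"]
      by (simp add: mult_left_le)
    have a_small: "a j \<le> (1/2::real)^(j+1) * (\<epsilon>/4)" if "j < N" for j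
    proof -
      have "\<bar>test_sum (\<phi> j) (range x) - test_sum (\<phi> j) (range y)\<bar> < \<epsilon>/4"
        using d1(2) that y c by (auto simp: \<delta>_def)
      then have "gfrac \<bar>test_sum (\<phi> j) (range x) - test_sum (\<phi> j) (range y)\<bar> \<le> \<epsilon>/4"
        using gfrac_le[of "\<bar>test_sum (\<phi> j) (range x) - test_sum (\<phi> j) (range y)\<bar>"] by simp
      then show ?thesis unfolding a_def by (intro mult_left_mono) auto
    qed
    have split: "suminf a = (\<Sum>n. a (n + N)) + (\<Sum>i<N. a i)"
      by (rule suminf_split_initial_segment[OF sa])
    have B1: "(\<Sum>i<N. a i) \<le> \<epsilon>/4"
    proof -
      have "(\<Sum>i<N. a i) \<le> (\<Sum>i<N. (1/2::real)^(i+1) * (\<epsilon>/4))"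
        by (rule sum_mono) (rule a_small, simp)
      also have "\<dots> = (\<Sum>i<N. (1/2::real)^(i+1)) * (\<epsilon>/4)" by (rule sum_distrib_right[symmetric])
      also have "\<dots> \<le> 1 * (\<epsilon>/4)"
      proof (rule mult_right_mono)
        show "(\<Sum>i<N. (1/2::real)^(i+1)) \<le> 1"
          using sum_le_suminf[OF half_summable, of "{..<N}"] half_suminf by simp
      qed (use eps in simp)
      finally show ?thesis by simp
    qed
    have B2: "(\<Sum>n. a (n + N)) \<le> (1/2::real)^N"
    proof -
      have "(\<Sum>n. a (n + N)) \<le> (\<Sum>n. (1/2::real)^N * (1/2::real)^(n+1))"
      proof (rule suminf_le)
        fix n show "a (n + N) \<le> (1/2::real)^N * (1/2::real)^(n+1)"
          using a_le[of "n+N"] by (simp add: power_add mult.commute)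
        show "summable (\<lambda>n. a (n + N))" using sa by (simp add: summable_iff_shift)
        show "summable (\<lambda>n. (1/2::real)^N * (1/2::real)^(n+1))"
          using half_summable by (rule summable_mult)
      qed
      also have "\<dots> = (1/2::real)^N" using suminf_mult[OF half_summable, of "(1/2::real)^N"] half_suminf by simp
      finally show ?thesis .
    qed
    have "vague_dist \<phi> (range x) (range y) = suminf a" unfolding vague_dist_alt a_def ..
    then have V: "vague_dist \<phi> (range x) (range y) < \<epsilon>/2" using split B1 B2 N by linarith
    show "conf_dist \<phi> x y < \<epsilon>" unfolding conf_dist_def using A V eps by linarith
  qed
  then show ?thesis using \<delta> by blast
qed



definition wS :: "nat set \<Rightarrow> real \<Rightarrow> nat \<Rightarrow> complex" where
  "wS S t k = (if k \<in> S then circlepath 0 1 t else 1)"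

definition loopS :: "nat set \<Rightarrow> real \<Rightarrow> nat \<Rightarrow> complex" where
  "loopS S t j = complex_of_real (2 * real (j div 2) + 3/2) + (if even j then -1 else 1) * wS S t (j div 2) / 2"

lemma norm_circ: "cmod (circlepath 0 1 t) = 1"
  by (simp add: circlepath norm_exp_eq_Re)

lemma norm_wS: "cmod (wS S t k) = 1"
  by (simp add: wS_def norm_circ)

lemma wS_01: "wS S 0 k = 1" "wS S 1 k = 1"
  using pathstart_circlepath[of 0 1] pathfinish_circlepath[of 0 1]
  by (auto simp: wS_def pathstart_def pathfinish_def)

lemma loopS_base: "loopS S 0 = nat_config" "loopS S 1 = nat_config"
proof -
  have *: "loopS S t j = nat_config j" if "wS S t (j div 2) = 1" for t j
  proof (cases "even j")
    case True
    then obtain k where "j = 2 * k" by (rule evenE)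
    then show ?thesis using that by (simp add: loopS_def nat_config_def)
  next
    case False
    then obtain k where "j = 2 * k + 1" by (rule oddE)
    then show ?thesis using that by (simp add: loopS_def nat_config_def)
  qed
  show "loopS S 0 = nat_config" "loopS S 1 = nat_config"
    using * wS_01 by auto
qed

lemma loopS_dist_centre:
  "cmod (loopS S t j - complex_of_real (2 * real (j div 2) + 3/2)) = 1/2"
  by (simp add: loopS_def norm_mult norm_divide norm_wS)

lemma loopS_inj: "inj (loopS S t)"
proof
  fix i j assume eq: "loopS S t i = loopS S t j"
  let ?c = "\<lambda>j. complex_of_real (2 * real (j div 2) + 3/2)"
  have "?c i - ?c j = (loopS S t j - ?c j) - (loopS S t i - ?c i)" using eq by simp
  then have "cmod (?c i - ?c j) \<le> cmod (loopS S t j - ?c j) + cmod (loopS S t i - ?c i)"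
    using norm_triangle_ineq4[of "loopS S t j - ?c j" "loopS S t i - ?c i"] by simp
  then have "cmod (?c i - ?c j) \<le> 1" using loopS_dist_centre[of S t i] loopS_dist_centre[of S t j] by linarith
  moreover have "?c i - ?c j = complex_of_real (2 * real (i div 2) - 2 * real (j div 2))" by simp
  ultimately have "\<bar>2 * real (i div 2) - 2 * real (j div 2)\<bar> \<le> 1"
    by (metis norm_of_real)
  then have d: "i div 2 = j div 2" by linarith
  have w: "wS S t (i div 2) \<noteq> 0" using norm_wS[of S t "i div 2"] by auto
  have "(if even i then -1 else 1) * wS S t (i div 2) = (if even j then -1 else (1::complex)) * wS S t (i div 2)"
    using eq d by (simp add: loopS_def)
  then have "(if even i then -1 else 1) = (if even j then -1 else (1::complex))"
    using w by simp
  then have "even i = even j" by (auto split: if_splits)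
  then have "i mod 2 = j mod 2"
    by (cases "even i") (auto simp: even_iff_mod_2_eq_zero odd_iff_mod_2_eq_one)
  then show "i = j" using d div_mult_mod_eq[of i 2] div_mult_mod_eq[of j 2] by linarith
qed

lemma loopS_big: "real j \<le> cmod (loopS S t j)"
proof -
  have "\<bar>Re (wS S t (j div 2))\<bar> \<le> 1" using abs_Re_le_cmod[of "wS S t (j div 2)"] norm_wS by simp
  then have "Re (loopS S t j) \<ge> 2 * real (j div 2) + 1" by (cases "even j") (auto simp: loopS_def)
  moreover have "real j \<le> 2 * real (j div 2) + 1" by linarith
  ultimately show ?thesis using complex_Re_le_cmod[of "loopS S t j"] by linarith
qed

lemma loopS_conf: "loopS S t \<in> conf_lf"
  unfolding conf_lf_def
proof (intro CollectI conjI allI impI)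
  show "inj (loopS S t)" by (rule loopS_inj)
  fix R :: real assume "R > 0"
  have "{j. cmod (loopS S t j) \<le> R} \<subseteq> {..nat \<lfloor>R\<rfloor>}"
  proof
    fix j assume "j \<in> {j. cmod (loopS S t j) \<le> R}"
    then have "real j \<le> R" using loopS_big[of j S t] by simp
    then show "j \<in> {..nat \<lfloor>R\<rfloor>}" by (simp add: le_nat_floor)
  qed
  then show "finite {j. cmod (loopS S t j) \<le> R}" by (rule finite_subset) simp
qed

lemma loopS_move: "cmod (loopS S t j - loopS S s j) \<le> cmod (circlepath 0 1 t - circlepath 0 1 s)"
proof -
  have "cmod (loopS S t j - loopS S s j) = cmod (wS S t (j div 2) - wS S s (j div 2)) / 2"
    by (simp add: loopS_def norm_mult norm_divide flip: right_diff_distrib diff_divide_distrib)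
  also have "\<dots> \<le> cmod (wS S t (j div 2) - wS S s (j div 2))" by simp
  also have "\<dots> \<le> cmod (circlepath 0 1 t - circlepath 0 1 s)" by (simp add: wS_def)
  finally show ?thesis .
qed

lemma loopS_path:
  assumes adm: "admissible_tests \<phi>"
  shows "pathin (conf_topology \<phi>) (loopS S)"
  unfolding pathin_def continuous_map_def
proof (intro conjI allI impI)
  show "loopS S \<in> topspace (top_of_set {0..1}) \<rightarrow> topspace (conf_topology \<phi>)"
    by (simp add: topspace_conf loopS_conf)
  fix U assume U: "openin (conf_topology \<phi>) U"
  show "openin (top_of_set {0..1}) {x \<in> topspace (top_of_set {0..1}). loopS S x \<in> U}"
    unfolding openin_euclidean_subtopology_iff
  proof (intro conjI ballI)
    fix t assume t: "t \<in> {x \<in> topspace (top_of_set {0..1::real}). loopS S x \<in> U}"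
    then obtain r where r: "r > 0" "\<forall>y\<in>conf_lf. conf_dist \<phi> (loopS S t) y < r \<longrightarrow> y \<in> U"
      using U unfolding openin_conf by auto
    obtain \<delta> where d: "\<delta> > 0" "\<forall>y\<in>conf_lf. (\<forall>k. cmod (loopS S t k - y k) \<le> \<delta>) \<longrightarrow> conf_dist \<phi> (loopS S t) y < r"
      using close[OF adm loopS_conf r(1)] by blast
    have "continuous (at t) (circlepath 0 1)" unfolding circlepath by (intro continuous_intros)
    then obtain e where e: "e > 0" "\<forall>x'. dist x' t < e \<longrightarrow> dist (circlepath 0 1 x') (circlepath 0 1 t) < \<delta>"
      using d(1) unfolding continuous_at_eps_delta by blast
    show "\<exists>e>0. \<forall>x'\<in>{0..1}. dist x' t < e \<longrightarrow> x' \<in> {x \<in> topspace (top_of_set {0..1}). loopS S x \<in> U}"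
    proof (intro exI[of _ e] conjI ballI impI)
      fix s :: real assume s: "s \<in> {0..1}" "dist s t < e"
      have "\<forall>k. cmod (loopS S t k - loopS S s k) \<le> \<delta>"
      proof
        fix k
        have "cmod (loopS S t k - loopS S s k) \<le> cmod (circlepath 0 1 t - circlepath 0 1 s)"
          by (rule loopS_move)
        also have "\<dots> < \<delta>" using e(2) s(2) by (simp add: dist_norm norm_minus_commute)
        finally show "cmod (loopS S t k - loopS S s k) \<le> \<delta>" by simp
      qed
      then have "loopS S s \<in> U" using d(2) r(2) loopS_conf by blast
      then show "s \<in> {x \<in> topspace (top_of_set {0..1}). loopS S x \<in> U}" using s by simp
    qed (use e in auto)
  qed auto
qed



lemma homotopy_diff:
  assumes hom: "loop_homotopic (conf_topology \<phi>) nat_config p q"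
  shows "homotopic_paths (-{0}) (\<lambda>t. p t (Suc (2*k)) - p t (2*k)) (\<lambda>t. q t (Suc (2*k)) - q t (2*k))"
proof -
  obtain h where hc: "continuous_map (prod_topology (top_of_set {0..1::real}) (top_of_set {0..1::real})) (conf_topology \<phi>) h"
    and h01: "\<forall>s\<in>{0..1}. h (0, s) = p s \<and> h (1, s) = q s"
    and hb: "\<forall>t\<in>{0..1}. h (t, 0) = nat_config \<and> h (t, 1) = nat_config"
    using hom unfolding loop_homotopic_def by blast
  define F where "F = (\<lambda>x::nat \<Rightarrow> complex. x (Suc (2*k)) - x (2*k))"
  have Fc: "continuous_map (conf_topology \<phi>) euclidean F"
    unfolding F_def by (intro continuous_map_diff proj_cont)
  have F0: "F x \<noteq> 0" if "x \<in> conf_lf" for x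
  proof -
    have "inj x" using that by (simp add: conf_lf_def)
    then have "x (Suc (2*k)) \<noteq> x (2*k)" using inj_eq[of x "Suc (2*k)" "2*k"] by simp
    then show ?thesis by (simp add: F_def)
  qed
  let ?T = "prod_topology (top_of_set {0..1::real}) (top_of_set {0..1::real})"
  have topT: "topspace ?T = {0..1} \<times> {0..1}" by simp
  have Gc: "continuous_map ?T euclidean (F \<circ> h)"
    using hc Fc by (rule continuous_map_compose)
  define G where "G = (\<lambda>z. if fst z = 0 then F (p (snd z)) else if fst z = 1 then F (q (snd z)) else F (h z))"
  have GeqFh: "G z = (F \<circ> h) z" if "z \<in> topspace ?T" for z
  proof -
    obtain a b where z: "z = (a, b)" by (cases z) simp
    have b: "b \<in> {0..1}" using that z by simp
    have "h (0, b) = p b" "h (1, b) = q b" using h01 b by auto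
    then show ?thesis by (simp add: G_def z)
  qed
  have Gc2: "continuous_map ?T euclidean G"
    by (rule continuous_map_eq[OF Gc]) (simp add: GeqFh)
  have Gne: "G z \<in> -{0}" if "z \<in> topspace ?T" for z
  proof -
    have "h z \<in> topspace (conf_topology \<phi>)" using continuous_map_image_subset_topspace[OF hc] that by blast
    then have "h z \<in> conf_lf" by (simp add: topspace_conf)
    then show ?thesis using GeqFh[OF that] F0 by simp
  qed
  have Gc3: "continuous_map ?T (top_of_set (-{0})) G"
    unfolding continuous_map_in_subtopology using Gc2 Gne by (simp add: Pi_iff)
  have e0: "(0::real) \<in> {0..1}" and e1: "(1::real) \<in> {0..1}" by auto
  have p0: "p 0 = nat_config" "p 1 = nat_config" using h01[rule_format, OF e0] h01[rule_format, OF e1]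
      hb[rule_format, OF e0] by auto
  have q0: "q 0 = nat_config" "q 1 = nat_config" using h01[rule_format, OF e0] h01[rule_format, OF e1]
      hb[rule_format, OF e1] by auto
  let ?Fp = "\<lambda>t. p t (Suc (2 * k)) - p t (2 * k)"
  have P: "\<forall>t\<in>{0..1}. pathstart (\<lambda>x. G (t, x)) = pathstart ?Fp \<and> pathfinish (\<lambda>x. G (t, x)) = pathfinish ?Fp"
  proof
    fix t :: real assume t: "t \<in> {0..1}"
    have "h (t, 0) = nat_config" "h (t, 1) = nat_config" using hb t by auto
    then have "G (t, 0) = F nat_config" "G (t, 1) = F nat_config"
      using p0 q0 by (simp_all add: G_def)
    then show "pathstart (\<lambda>x. G (t, x)) = pathstart ?Fp \<and> pathfinish (\<lambda>x. G (t, x)) = pathfinish ?Fp"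
      using p0 by (simp add: pathstart_def pathfinish_def F_def)
  qed
  show ?thesis
    unfolding homotopic_paths_def homotopic_with_def
  proof (rule exI[of _ G], intro conjI)
    show "continuous_map (prod_topology (top_of_set {0..1}) (top_of_set {0..1})) (top_of_set (- {0})) G"
      by (rule Gc3)
    show "\<forall>x. G (0, x) = p x (Suc (2 * k)) - p x (2 * k)" by (simp add: G_def F_def)
    show "\<forall>x. G (1, x) = q x (Suc (2 * k)) - q x (2 * k)" by (simp add: G_def F_def)
    show "\<forall>t\<in>{0..1}. pathstart (\<lambda>x. G (t, x)) = pathstart ?Fp \<and> pathfinish (\<lambda>x. G (t, x)) = pathfinish ?Fp"
      by (rule P)
  qed
qed

lemma loopS_diff0: "loopS S t (Suc (2*k)) - loopS S t (2*k) = wS S t k"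
proof -
  have a: "Suc (2*k) div 2 = k" "(2*k) div 2 = k" by auto
  have b: "\<not> even (Suc (2*k))" "even (2*k)" by auto
  show ?thesis unfolding loopS_def a b if_True if_False by (simp add: field_simps)
qed

lemma line11: "linepath (1::complex) 1 = (\<lambda>t. 1)"
  by (rule ext) (simp add: linepath_def scaleR_conv_of_real algebra_simps)

lemma loopS_diff: "(\<lambda>t. loopS S t (Suc (2*k)) - loopS S t (2*k)) = (if k \<in> S then circlepath 0 1 else linepath 1 1)"
  unfolding loopS_diff0 line11 by (rule ext) (simp add: wS_def)

lemma winding_loopS: "winding_number (\<lambda>t. loopS S t (Suc (2*k)) - loopS S t (2*k)) 0 = (if k \<in> S then 1 else 0)"
  unfolding loopS_diff by (simp add: winding_number_circlepath_centre)

lemma uncountable_nat_sets: "\<not> countable (UNIV :: nat set set)"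
proof
  assume "countable (UNIV :: nat set set)"
  then obtain f :: "nat set \<Rightarrow> nat" where f: "inj f"
    unfolding countable_def by blast
  define g where "g = inv f"
  have "g (f {m. m \<notin> g m}) = {m. m \<notin> g m}" unfolding g_def by (rule inv_f_f[OF f])
  then show False by blast
qed

theorem mainTheorem5:
  fixes \<phi> :: "nat \<Rightarrow> complex \<Rightarrow> real"
  assumes "admissible_tests \<phi>"
  shows "\<not> countable (fundamental_group_set (conf_topology \<phi>) nat_config)"
proof
  assume c: "countable (fundamental_group_set (conf_topology \<phi>) nat_config)"
  let ?X = "conf_topology \<phi>"
  let ?r = "{(p, q). p \<in> loops_at ?X nat_config \<and> q \<in> loops_at ?X nat_config \<and> loop_homotopic ?X nat_config p q}"
  define cls where "cls = (\<lambda>S. ?r `` {loopS S})"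
  have inL: "loopS S \<in> loops_at ?X nat_config" for S
    using loopS_path[OF assms] loopS_base by (simp add: loops_at_def)
  have refl: "loop_homotopic ?X nat_config g g" if "g \<in> loops_at ?X nat_config" for g
  proof -
    have "continuous_map (prod_topology (top_of_set {0..1::real}) (top_of_set {0..1::real})) ?X (g \<circ> snd)"
    proof (rule continuous_map_compose[OF continuous_map_snd])
      show "continuous_map (top_of_set {0..1::real}) ?X g" using that unfolding loops_at_def pathin_def by simp
    qed
    moreover have "g 0 = nat_config" "g 1 = nat_config" using that by (auto simp: loops_at_def)
    ultimately show ?thesis unfolding loop_homotopic_def
      by (intro exI[of _ "g \<circ> snd"] conjI ballI) simp_all
  qed
  have clsin: "cls S \<in> fundamental_group_set ?X nat_config" for S
    unfolding fundamental_group_set_def cls_def by (rule quotientI[OF inL])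
  have sub: "range cls \<subseteq> fundamental_group_set ?X nat_config" using clsin by auto
  have "inj cls"
  proof
    fix S T assume eq: "cls S = cls T"
    have "loopS T \<in> cls T" unfolding cls_def using inL refl by auto
    then have "loopS T \<in> cls S" using eq by simp
    then have hom: "loop_homotopic ?X nat_config (loopS S) (loopS T)" unfolding cls_def by auto
    show "S = T"
    proof (rule set_eqI)
      fix k
      have "winding_number (\<lambda>t. loopS S t (Suc (2*k)) - loopS S t (2*k)) 0 =
            winding_number (\<lambda>t. loopS T t (Suc (2*k)) - loopS T t (2*k)) 0"
        by (rule winding_number_homotopic_paths[OF homotopy_diff[OF hom]])
      then show "k \<in> S \<longleftrightarrow> k \<in> T" unfolding winding_loopS by (auto split: if_splits)
    qed
  qed
  have "countable (range cls)" using c sub by (rule countable_subset[rotated])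
  then have "countable (UNIV :: nat set set)" using \<open>inj cls\<close> by (rule countable_image_inj_on)
  then show False using uncountable_nat_sets by simp
qed


end
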